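(* If $G$ is a graph with $\delta(G)\ge 2$, then $$\mathrm{TC}_2(G)\le \max\Big\{\Delta(G),\ \Big\lfloor\tfrac{\delta(G)}{2}\Big\rfloor(\Delta(G)-4)+\delta(G)\Big\}.$$ Moreover, this bound is sharp, i.e., there exist graphs attaining equality.
   Context: All graphs are finite, simple and connected. $N(v)$ denotes the open neighborhood of $v$; $\delta(G)$ and $\Delta(G)$ are minimum and maximum degree. A set $S\subseteq V(G)$ is a total $2$-dominating set if $|N(v)\cap S|\ge 2$ for every $v\in V(G)$. Two disjoint sets $U,W\subseteq V(G)$ form a total $2$-coalition if neither is a total $2$-dominating set but $U\cup W$ is. A total $2$-coalition partition of $G$ is a partition $\Omega$ of $V(G)$ in which every set forms a total $2$-coalition with some other set of $\Omega$; $\mathrm{TC}_2(G)$ is the maximum cardinality of such a partition. *)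

theory Defs
  imports Main "HOL-Library.Disjoint_Sets"
begin

definition graph :: "'a set \<Rightarrow> ('a \<Rightarrow> 'a \<Rightarrow> bool) \<Rightarrow> bool" where
  "graph V E \<longleftrightarrow> finite V \<and> V \<noteq> {}
     \<and> (\<forall>u v. E u v \<longrightarrow> u \<in> V \<and> v \<in> V)
     \<and> (\<forall>u v. E u v \<longrightarrow> E v u)
     \<and> (\<forall>v. \<not> E v v)
     \<and> (\<forall>u\<in>V. \<forall>v\<in>V. E\<^sup>*\<^sup>* u v)"

definition nbhd :: "'a set \<Rightarrow> ('a \<Rightarrow> 'a \<Rightarrow> bool) \<Rightarrow> 'a \<Rightarrow> 'a set" where
  "nbhd V E v = {u \<in> V. E v u}"

definition degree :: "'a set \<Rightarrow> ('a \<Rightarrow> 'a \<Rightarrow> bool) \<Rightarrow> 'a \<Rightarrow> nat" where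
  "degree V E v = card (nbhd V E v)"

definition min_degree :: "'a set \<Rightarrow> ('a \<Rightarrow> 'a \<Rightarrow> bool) \<Rightarrow> nat" where
  "min_degree V E = Min (degree V E ` V)"

definition max_degree :: "'a set \<Rightarrow> ('a \<Rightarrow> 'a \<Rightarrow> bool) \<Rightarrow> nat" where
  "max_degree V E = Max (degree V E ` V)"

definition total_2_dominating :: "'a set \<Rightarrow> ('a \<Rightarrow> 'a \<Rightarrow> bool) \<Rightarrow> 'a set \<Rightarrow> bool" where
  "total_2_dominating V E S \<longleftrightarrow> S \<subseteq> V \<and> (\<forall>v\<in>V. card (nbhd V E v \<inter> S) \<ge> 2)"

definition total_2_coalition :: "'a set \<Rightarrow> ('a \<Rightarrow> 'a \<Rightarrow> bool) \<Rightarrow> 'a set \<Rightarrow> 'a set \<Rightarrow> bool" where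
  "total_2_coalition V E U W \<longleftrightarrow> U \<inter> W = {}
     \<and> \<not> total_2_dominating V E U \<and> \<not> total_2_dominating V E W
     \<and> total_2_dominating V E (U \<union> W)"

definition total_2_coalition_partition :: "'a set \<Rightarrow> ('a \<Rightarrow> 'a \<Rightarrow> bool) \<Rightarrow> 'a set set \<Rightarrow> bool" where
  "total_2_coalition_partition V E \<Omega> \<longleftrightarrow> partition_on V \<Omega>
     \<and> (\<forall>U\<in>\<Omega>. \<exists>W\<in>\<Omega>. W \<noteq> U \<and> total_2_coalition V E U W)"

text \<open>Maximum cardinality of a total 2-coalition partition (Sup of a bounded
set of naturals; it is 0 if no such partition exists).\<close>
definition TC2 :: "'a set \<Rightarrow> ('a \<Rightarrow> 'a \<Rightarrow> bool) \<Rightarrow> nat" where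
  "TC2 V E = Sup {card \<Omega> | \<Omega>. total_2_coalition_partition V E \<Omega>}"

definition TC2_bound :: "'a set \<Rightarrow> ('a \<Rightarrow> 'a \<Rightarrow> bool) \<Rightarrow> int" where
  "TC2_bound V E = max (int (max_degree V E))
     (int (min_degree V E div 2) * (int (max_degree V E) - 4) + int (min_degree V E))"

end

theory Submission imports Defs begin

lemma arith_final1:
  fixes a d D n :: nat
  assumes "2*a \<le> d" "d \<le> D" "2 \<le> d" "n + 2 \<le> D + a"
  shows "int n \<le> max (int D) (int (d div 2) * (int D - 4) + int d)"
proof (cases "a \<le> 2")
  case True then show ?thesis using assms by simp
next
  case False
  have h: "a \<le> d div 2" using assms by linarith
  have D6: "D \<ge> 6" using assms False by linarith
  have "int a * (int D - 4) \<le> int (d div 2) * (int D - 4)"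
    using h D6 by (intro mult_right_mono) auto
  moreover have "int n + 2 \<le> int a * (int D - 4) + 2 * int a"
  proof -
    have "(int a - 1) * (int D - 3) \<ge> 2 * 3" using False D6
      by (intro mult_mono) auto
    then show ?thesis using assms(4) by (simp add: algebra_simps)
  qed
  moreover have "2 * int a \<le> int d" using assms by linarith
  ultimately show ?thesis by linarith
qed

lemma arith_final2:
  fixes a b d D n :: nat
  assumes "2*a + b \<le> d" "d \<le> D" "n \<le> a + b + a*(D-3)"
  shows "int n \<le> max (int D) (int (d div 2) * (int D - 4) + int d)"
proof (cases "D \<le> 3")
  case True then show ?thesis using assms by simp
next
  case False
  have h: "a \<le> d div 2" using assms by linarith
  have "int a * (int D - 4) \<le> int (d div 2) * (int D - 4)"
    using h False by (intro mult_right_mono) auto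
  moreover have "int n \<le> int a + int b + int a * (int D - 3)"
  proof -
    have e: "int (D - 3) = int D - 3" using False by (simp add: of_nat_diff)
    have "int (a*(D-3)) = int a * (int D - 3)" by (simp only: of_nat_mult e)
    moreover have "int n \<le> int a + int b + int (a*(D-3))" using assms(3) by linarith
    ultimately show ?thesis by linarith
  qed
  ultimately show ?thesis using assms(1) by (simp add: algebra_simps)
qed


lemma core:
  fixes Om :: "'b set" and cp :: "'b \<Rightarrow> 'b \<Rightarrow> bool" and F :: "'v \<Rightarrow> 'b \<Rightarrow> nat"
  assumes fin: "finite Om"
  and part: "\<And>X. X \<in> Om \<Longrightarrow> \<exists>Y\<in>Om. Y \<noteq> X \<and> cp X Y"
  and cov: "\<And>X Y y. X \<in> Om \<Longrightarrow> Y \<in> Om \<Longrightarrow> cp X Y \<Longrightarrow> y \<in> Vs \<Longrightarrow> 2 \<le> F y X + F y Y"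
  and wit: "\<And>X. X \<in> Om \<Longrightarrow> \<exists>y\<in>Vs. F y X \<le> 1"
  and degD: "\<And>y. y \<in> Vs \<Longrightarrow> (\<Sum>X\<in>Om. F y X) \<le> D"
  and vV: "v \<in> Vs" and vd: "(\<Sum>X\<in>Om. F v X) \<le> d"
  and dd: "2 \<le> d" "d \<le> D"
  shows "int (card Om) \<le> max (int D) (int (d div 2) * (int D - 4) + int d)"
proof -
  define c where "c = F v"
  define A2 where "A2 = {X\<in>Om. 2 \<le> c X}"
  define A1 where "A1 = {X\<in>Om. c X = 1}"
  define B where "B = {X\<in>Om. c X = 0}"
  define a where "a = card A2"
  have finA: "finite A2" "finite A1" "finite B" using fin by (auto simp: A2_def A1_def B_def)
  have cardOm: "card Om = card A2 + card A1 + card B"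
  proof -
    have "Om = (A2 \<union> A1) \<union> B" by (auto simp: A2_def A1_def B_def)
    moreover have "card ((A2 \<union> A1) \<union> B) = card (A2 \<union> A1) + card B"
      using finA by (intro card_Un_disjoint) (auto simp: A2_def A1_def B_def)
    moreover have "card (A2 \<union> A1) = card A2 + card A1"
      using finA by (intro card_Un_disjoint) (auto simp: A2_def A1_def B_def)
    ultimately show ?thesis by simp
  qed
  have a2: "2*a + card A1 \<le> d"
  proof -
    have "(\<Sum>X\<in>A2. 2) \<le> (\<Sum>X\<in>A2. c X)" by (rule sum_mono) (simp add: A2_def)
    hence s1: "2*a \<le> sum c A2" by (simp add: a_def)
    have s2: "sum c A1 = card A1" by (simp add: A1_def)
    have "sum c (A2 \<union> A1) = sum c A2 + sum c A1"
      using finA by (intro sum.union_disjoint) (auto simp: A2_def A1_def)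
    moreover have "sum c (A2 \<union> A1) \<le> sum c Om"
      using fin by (intro sum_mono2) (auto simp: A2_def A1_def)
    ultimately show ?thesis using s1 s2 vd by (simp add: c_def)
  qed
  define Bp where "Bp W = {X\<in>B. cp X W}" for W
  have finBp: "finite (Bp W)" for W using finA by (simp add: Bp_def)
  have Bcover: "B \<subseteq> (\<Union>W\<in>A2. Bp W)"
  proof
    fix X assume X: "X \<in> B"
    then have XO: "X \<in> Om" by (simp add: B_def)
    obtain Y where Y: "Y \<in> Om" "Y \<noteq> X" "cp X Y" using part[OF XO] by blast
    have "2 \<le> c X + c Y" using cov[OF XO Y(1) Y(3) vV] by (simp add: c_def)
    then have "Y \<in> A2" using X Y by (simp add: B_def A2_def)
    moreover have "X \<in> Bp Y" using X Y by (simp add: Bp_def)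
    ultimately show "X \<in> (\<Union>W\<in>A2. Bp W)" by blast
  qed
  have cardB: "card B \<le> (\<Sum>W\<in>A2. card (Bp W))"
  proof -
    have "card B \<le> card (\<Union>W\<in>A2. Bp W)"
      using Bcover finA finBp by (intro card_mono) auto
    also have "\<dots> \<le> (\<Sum>W\<in>A2. card (Bp W))" using finA by (intro card_UN_le)
    finally show ?thesis .
  qed
  have claim: "card (Bp W) \<le> D - 3 \<or> card Om \<le> D \<or> card Om + 2 \<le> D + a" if W: "W \<in> A2" for W
  proof (cases "card (Bp W) \<le> D - 3")
    case True then show ?thesis by simp
  next
    case False
    define m where "m = card (Bp W)"
    have m1: "1 \<le> m" "D \<le> m + 2" using False by (auto simp: m_def)
    have WO: "W \<in> Om" and cW: "2 \<le> c W" using W by (auto simp: A2_def)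
    obtain x where x: "x \<in> Vs" "F x W \<le> 1" using wit[OF WO] by blast
    define f where "f = F x"
    define t where "t = f W"
    have t1: "t \<le> 1" using x by (simp add: t_def f_def)
    define T where "T = insert W (Bp W)"
    define Rs where "Rs = Om - T"
    have BpO: "Bp W \<subseteq> Om" by (auto simp: Bp_def B_def)
    have WnBp: "W \<notin> Bp W" using cW by (auto simp: Bp_def B_def)
    have TO: "T \<subseteq> Om" using BpO WO by (simp add: T_def)
    have finT: "finite T" using TO fin finite_subset by blast
    have finRs: "finite Rs" using fin by (simp add: Rs_def)
    have sumT: "sum f T = t + sum f (Bp W)" using WnBp finBp by (simp add: T_def t_def)
    have sumOm: "sum f Om = sum f Rs + sum f T"
      unfolding Rs_def by (rule sum.subset_diff[OF TO fin])
    have cardT: "card T = 1 + m" using WnBp finBp by (simp add: T_def m_def)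
    have cardOm2: "card Om = card Rs + 1 + m"
      using card_Diff_subset[OF finT TO] card_mono[OF fin TO] cardT by (simp add: Rs_def)
    have tot: "t + sum f (Bp W) + sum f Rs \<le> D"
      using degD[OF x(1)] sumT sumOm by (simp add: f_def)
    have fQ: "2 \<le> f Q + t" if "Q \<in> Bp W" for Q
      using cov[of Q W x] that BpO WO x(1) by (auto simp: Bp_def f_def t_def)
    have sBp1: "m * (2 - t) \<le> sum f (Bp W)"
    proof -
      have "(\<Sum>Q\<in>Bp W. 2 - t) \<le> sum f (Bp W)" using fQ by (intro sum_mono) force
      thus ?thesis by (simp add: m_def)
    qed
    have e1: "sum f Rs \<le> 1"
    proof (cases "t = 0")
      case True then show ?thesis using sBp1 tot m1 by simp
    next
      case False then have "t = 1" using t1 by simp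
      then show ?thesis using sBp1 tot m1 by simp
    qed
    have partnerT: "\<exists>P'\<in>T. cp P P'" if P: "P \<in> Rs" for P
    proof -
      have PO: "P \<in> Om" using P by (simp add: Rs_def)
      obtain P' where P': "P' \<in> Om" "P' \<noteq> P" "cp P P'" using part[OF PO] by blast
      have "P' \<in> T"
      proof (rule ccontr)
        assume "P' \<notin> T"
        then have "P' \<in> Rs" using P' by (simp add: Rs_def)
        then have "sum f {P, P'} \<le> sum f Rs" using P finRs by (intro sum_mono2) auto
        moreover have "sum f {P, P'} = f P + f P'" using P' by simp
        moreover have "2 \<le> f P + f P'" using cov[OF PO P'(1) P'(3) x(1)] by (simp add: f_def)
        ultimately show False using e1 by simp
      qed
      then show ?thesis using P' by blast
    qed
    define Rs1 where "Rs1 = {P\<in>Rs. 1 \<le> f P}"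
    define Rs2 where "Rs2 = {P\<in>Rs. f P = 0}"
    have cardO: "card Rs = card Rs1 + card Rs2"
    proof -
      have "Rs = Rs1 \<union> Rs2" by (auto simp: Rs1_def Rs2_def)
      moreover have "card (Rs1 \<union> Rs2) = card Rs1 + card Rs2"
        using finRs by (intro card_Un_disjoint) (auto simp: Rs1_def Rs2_def)
      ultimately show ?thesis by simp
    qed
    have cO1: "card Rs1 \<le> sum f Rs"
    proof -
      have "card Rs1 = (\<Sum>P\<in>Rs1. 1)" by simp
      also have "\<dots> \<le> sum f Rs1" by (rule sum_mono) (simp add: Rs1_def)
      also have "\<dots> \<le> sum f Rs" using finRs by (intro sum_mono2) (auto simp: Rs1_def)
      finally show ?thesis .
    qed
    have O2A: "Rs2 \<subseteq> A2 - {W}" and O2Q: "Rs2 \<noteq> {} \<Longrightarrow> \<exists>Q\<in>Bp W. 2 \<le> f Q"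
    proof -
      have *: "P \<in> A2 - {W} \<and> (\<exists>Q\<in>Bp W. 2 \<le> f Q)" if P: "P \<in> Rs2" for P
      proof -
        have PO': "P \<in> Rs" and fP: "f P = 0" using P by (auto simp: Rs2_def)
        have PO: "P \<in> Om" and PT: "P \<notin> T" using PO' by (auto simp: Rs_def)
        obtain P' where P': "P' \<in> T" "cp P P'" using partnerT[OF PO'] by blast
        have P'Rs: "P' \<in> Om" using P' TO by blast
        have "2 \<le> f P + f P'" using cov[OF PO P'Rs P'(2) x(1)] by (simp add: f_def)
        then have fP': "2 \<le> f P'" using fP by simp
        then have "P' \<noteq> W" using t1 by (auto simp: t_def)
        then have P'B: "P' \<in> Bp W" using P' by (simp add: T_def)
        then have "c P' = 0" by (simp add: Bp_def B_def)
        moreover have "2 \<le> c P + c P'" using cov[OF PO P'Rs P'(2) vV] by (simp add: c_def)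
        ultimately have "P \<in> A2" using PO by (simp add: A2_def)
        moreover have "P \<noteq> W" using PT by (auto simp: T_def)
        ultimately show ?thesis using P'B fP' by blast
      qed
      show "Rs2 \<subseteq> A2 - {W}" using * by blast
      show "Rs2 \<noteq> {} \<Longrightarrow> \<exists>Q\<in>Bp W. 2 \<le> f Q" using * by blast
    qed
    have cO2: "card Rs2 \<le> a - 1"
    proof -
      have "card Rs2 \<le> card (A2 - {W})" using O2A finA by (intro card_mono) auto
      also have "\<dots> = a - 1" using W by (simp add: a_def)
      finally show ?thesis .
    qed
    have a1: "1 \<le> a" using W finA by (simp add: a_def card_gt_0_iff Suc_le_eq) blast
    have sBp2: "m + 1 \<le> sum f (Bp W)" if ne: "Rs2 \<noteq> {}"
    proof -
      obtain Q0 where Q0: "Q0 \<in> Bp W" "2 \<le> f Q0" using O2Q[OF ne] by blast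
      have "sum f (Bp W) = f Q0 + sum f (Bp W - {Q0})"
        using Q0 finBp by (simp add: sum.remove)
      moreover have "card (Bp W - {Q0}) \<le> sum f (Bp W - {Q0})"
      proof -
        have "card (Bp W - {Q0}) = (\<Sum>Q\<in>Bp W - {Q0}. 1)" by simp
        also have "\<dots> \<le> sum f (Bp W - {Q0})" using fQ t1 by (intro sum_mono) force
        finally show ?thesis .
      qed
      moreover have "card (Bp W - {Q0}) = m - 1" using Q0 finBp by (simp add: m_def)
      ultimately show ?thesis using Q0 m1 by simp
    qed
    have "card Om \<le> D \<or> card Om + 2 \<le> D + a"
    proof (cases "Rs2 = {}")
      case True
      then have "card Rs2 = 0" by simp
      show ?thesis
      proof (cases "t = 0")
        case True
        then have "2*m \<le> sum f (Bp W)" using sBp1 by simp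
        then show ?thesis using cardOm2 cardO cO1 tot m1 True \<open>card Rs2 = 0\<close> by simp
      next
        case False
        then have "t = 1" using t1 by simp
        then have "m \<le> sum f (Bp W)" using sBp1 by simp
        then show ?thesis using cardOm2 cardO cO1 tot m1 \<open>t = 1\<close> \<open>card Rs2 = 0\<close> by simp
      qed
    next
      case False
      then have s2: "m + 1 \<le> sum f (Bp W)" by (rule sBp2)
      show ?thesis
      proof (cases "t = 0")
        case True
        then have s3: "2 * m \<le> sum f (Bp W)" using sBp1 by simp
        show ?thesis
        proof (cases "m = 1")
          case True
          then have "D \<le> 3" using m1 by simp
          then have "a \<le> 1" using a2 dd by simp
          then show ?thesis using cardOm2 cardO cO1 cO2 tot s3 \<open>t = 0\<close> True by simp
        next
          case False
          then have "card Om + 2 \<le> D + a" using cardOm2 cardO cO1 cO2 tot s3 \<open>t = 0\<close> m1 a1 by linarith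
          then show ?thesis by simp
        qed
      next
        case False
        then have "t = 1" using t1 by simp
        then have "card Om + 2 \<le> D + a" using cardOm2 cardO cO1 cO2 tot s2 a1 by linarith
        then show ?thesis by simp
      qed
    qed
    then show ?thesis by blast
  qed
  show ?thesis
  proof (cases "\<exists>W\<in>A2. card Om \<le> D \<or> card Om + 2 \<le> D + a")
    case True
    then obtain W where "card Om \<le> D \<or> card Om + 2 \<le> D + a" by blast
    then show ?thesis
    proof
      assume "card Om \<le> D" then show ?thesis by simp
    next
      assume "card Om + 2 \<le> D + a"
      then show ?thesis using arith_final1[of a d D "card Om"] a2 dd by simp
    qed
  next
    case False
    then have "\<forall>W\<in>A2. card (Bp W) \<le> D - 3" using claim by blast
    then have "(\<Sum>W\<in>A2. card (Bp W)) \<le> card A2 * (D - 3)"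
      using sum_bounded_above[of A2 "\<lambda>W. card (Bp W)" "D - 3"] by simp
    then have "card Om \<le> a + card A1 + a * (D - 3)"
      using cardOm cardB by (simp add: a_def)
    then show ?thesis using arith_final2[of a "card A1" d D "card Om"] a2 dd by simp
  qed
qed


lemma sum_partition_card:
  assumes "partition_on V Om" "finite V" "S \<subseteq> V"
  shows "(\<Sum>X\<in>Om. card (S \<inter> X)) = card S"
proof -
  have U: "\<Union>Om = V" and dj: "disjoint Om" using assms(1) by (auto simp: partition_on_def)
  have finOm: "finite Om" using U assms(2) by (metis finite_UnionD)
  have "S = (\<Union>X\<in>Om. S \<inter> X)" using U assms(3) by blast
  moreover have "card (\<Union>X\<in>Om. S \<inter> X) = (\<Sum>X\<in>Om. card (S \<inter> X))"
  proof (rule card_UN_disjoint)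
    show "finite Om" by (rule finOm)
    show "\<forall>i\<in>Om. finite (S \<inter> i)" using assms(2,3) finite_subset by blast
    show "\<forall>i\<in>Om. \<forall>j\<in>Om. i \<noteq> j \<longrightarrow> S \<inter> i \<inter> (S \<inter> j) = {}"
      using dj unfolding disjoint_def by blast
  qed
  ultimately show ?thesis by simp
qed

lemma main_bound:
  assumes G: "graph V E" and md: "2 \<le> min_degree V E"
    and P: "total_2_coalition_partition V E Om"
  shows "int (card Om) \<le> TC2_bound V E"
proof -
  have finV: "finite V" and neV: "V \<noteq> {}" using G by (auto simp: graph_def)
  have po: "partition_on V Om" and pp: "\<And>U. U \<in> Om \<Longrightarrow> \<exists>W\<in>Om. W \<noteq> U \<and> total_2_coalition V E U W"
    using P by (auto simp: total_2_coalition_partition_def)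
  have U: "\<Union>Om = V" using po by (auto simp: partition_on_def)
  have finOm: "finite Om" using U finV by (metis finite_UnionD)
  have nbV: "nbhd V E y \<subseteq> V" for y by (auto simp: nbhd_def)
  have sumdeg: "(\<Sum>X\<in>Om. card (nbhd V E y \<inter> X)) = degree V E y" for y
    using sum_partition_card[OF po finV nbV] by (simp add: degree_def)
  have "min_degree V E \<in> degree V E ` V" using finV neV unfolding min_degree_def by (intro Min_in) auto
  then obtain v where v: "v \<in> V" "degree V E v = min_degree V E" by (metis imageE)
  have dle: "degree V E y \<le> max_degree V E" if "y \<in> V" for y
    using finV that unfolding max_degree_def by (intro Max_ge) auto
  have "int (card Om) \<le> max (int (max_degree V E)) (int (min_degree V E div 2) * (int (max_degree V E) - 4) + int (min_degree V E))"
  proof (rule core[where F = "\<lambda>y X. card (nbhd V E y \<inter> X)" and Vs = V and v = v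
        and cp = "total_2_coalition V E"])
    show "finite Om" by (rule finOm)
    show "\<exists>Y\<in>Om. Y \<noteq> X \<and> total_2_coalition V E X Y" if "X \<in> Om" for X using pp[OF that] by blast
    show "2 \<le> card (nbhd V E y \<inter> X) + card (nbhd V E y \<inter> Y)"
      if "X \<in> Om" "Y \<in> Om" "total_2_coalition V E X Y" "y \<in> V" for X Y y
    proof -
      have dj: "X \<inter> Y = {}" and td: "total_2_dominating V E (X \<union> Y)"
        using that(3) by (auto simp: total_2_coalition_def)
      have "2 \<le> card (nbhd V E y \<inter> (X \<union> Y))" using td that(4) by (auto simp: total_2_dominating_def)
      moreover have "nbhd V E y \<inter> (X \<union> Y) = (nbhd V E y \<inter> X) \<union> (nbhd V E y \<inter> Y)" by blast
      moreover have "card ((nbhd V E y \<inter> X) \<union> (nbhd V E y \<inter> Y)) = card (nbhd V E y \<inter> X) + card (nbhd V E y \<inter> Y)"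
        using dj finV nbV finite_subset by (intro card_Un_disjoint) blast+
      ultimately show ?thesis by simp
    qed
    show "\<exists>y\<in>V. card (nbhd V E y \<inter> X) \<le> 1" if XO: "X \<in> Om" for X
    proof -
      obtain W where "total_2_coalition V E X W" using pp[OF XO] by blast
      then have "\<not> total_2_dominating V E X" by (simp add: total_2_coalition_def)
      moreover have "X \<subseteq> V" using U XO by blast
      ultimately obtain y where "y \<in> V" "\<not> 2 \<le> card (nbhd V E y \<inter> X)"
        by (auto simp: total_2_dominating_def)
      then show ?thesis by (intro bexI[of _ y]) auto
    qed
    show "(\<Sum>X\<in>Om. card (nbhd V E y \<inter> X)) \<le> max_degree V E" if "y \<in> V" for y
      using sumdeg dle[OF that] by simp
    show "v \<in> V" by (rule v(1))
    show "(\<Sum>X\<in>Om. card (nbhd V E v \<inter> X)) \<le> min_degree V E" using sumdeg v by simp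
    show "2 \<le> min_degree V E" by (rule md)
    show "min_degree V E \<le> max_degree V E" using v dle[OF v(1)] by linarith
  qed
  then show ?thesis by (simp add: TC2_bound_def)
qed

lemma TC2_le:
  assumes G: "graph V E" and md: "2 \<le> min_degree V E"
  shows "int (TC2 V E) \<le> TC2_bound V E"
proof -
  define S where "S = {card \<Omega> | \<Omega>. total_2_coalition_partition V E \<Omega>}"
  have B0: "0 \<le> TC2_bound V E" by (simp add: TC2_bound_def)
  show ?thesis
  proof (cases "S = {}")
    case True then show ?thesis using B0 by (simp add: TC2_def S_def[symmetric])
  next
    case False
    have "Sup S \<le> nat (TC2_bound V E)"
    proof (rule cSup_least[OF False])
      fix n assume "n \<in> S"
      then obtain Om where "n = card Om" "total_2_coalition_partition V E Om" by (auto simp: S_def)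
      then have "int n \<le> TC2_bound V E" using main_bound[OF G md] by simp
      then show "n \<le> nat (TC2_bound V E)" by simp
    qed
    then show ?thesis using B0 by (simp add: TC2_def S_def[symmetric])
  qed
qed


definition K3V :: "nat set" where "K3V = {0,1,2}"
definition K3E :: "nat \<Rightarrow> nat \<Rightarrow> bool" where "K3E u v = (u \<in> K3V \<and> v \<in> K3V \<and> u \<noteq> v)"

lemma K3_nbhd: "x \<in> K3V \<Longrightarrow> nbhd K3V K3E x = K3V - {x}"
  by (auto simp: nbhd_def K3E_def)

lemma K3_degree: "x \<in> K3V \<Longrightarrow> degree K3V K3E x = 2"
proof -
  assume x: "x \<in> K3V"
  have "card K3V = 3" by (simp add: K3V_def)
  then show ?thesis using x by (simp add: degree_def K3_nbhd card_Diff_singleton)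
qed

lemma K3_degs: "degree K3V K3E ` K3V = {2}"
  using K3_degree by (auto simp: K3V_def)

lemma K3_min: "min_degree K3V K3E = 2" by (simp add: min_degree_def K3_degs)
lemma K3_max: "max_degree K3V K3E = 2" by (simp add: max_degree_def K3_degs)

lemma K3_graph: "graph K3V K3E"
  unfolding graph_def
proof (intro conjI ballI allI impI)
  show "finite K3V" "K3V \<noteq> {}" by (auto simp: K3V_def)
  fix u v
  show "K3E u v \<Longrightarrow> u \<in> K3V" "K3E u v \<Longrightarrow> v \<in> K3V" "K3E u v \<Longrightarrow> K3E v u" by (auto simp: K3E_def)
  show "\<not> K3E v v" by (simp add: K3E_def)
next
  fix u v assume "u \<in> K3V" "v \<in> K3V"
  then show "K3E\<^sup>*\<^sup>* u v"
    by (cases "u = v") (auto simp: K3E_def intro: r_into_rtranclp)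
qed

lemma K3_t2d: "total_2_dominating K3V K3E S \<longleftrightarrow> S \<subseteq> K3V \<and> (\<forall>v\<in>K3V. 2 \<le> card ((K3V - {v}) \<inter> S))"
  by (auto simp: total_2_dominating_def K3_nbhd)

lemma K3_part: "total_2_coalition_partition K3V K3E {{0},{1,2}}"
proof -
  have n0: "\<not> total_2_dominating K3V K3E {0}"
    unfolding K3_t2d by (auto simp: K3V_def)
  have n12: "\<not> total_2_dominating K3V K3E {1,2}"
  proof -
    have "(K3V - {1}) \<inter> {1,2} = {2::nat}" by (auto simp: K3V_def)
    then show ?thesis unfolding K3_t2d by (auto simp: K3V_def)
  qed
  have u: "total_2_dominating K3V K3E ({0} \<union> {1,2})"
  proof -
    have "{0} \<union> {1,2} = K3V" by (auto simp: K3V_def)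
    moreover have "\<forall>v\<in>K3V. 2 \<le> card ((K3V - {v}) \<inter> K3V)"
      by (auto simp: K3V_def)
    ultimately show ?thesis unfolding K3_t2d by simp
  qed
  have u': "total_2_dominating K3V K3E ({1,2} \<union> {0})" using u by (simp add: Un_commute)
  have c1: "total_2_coalition K3V K3E {0} {1,2}" using n0 n12 u by (simp add: total_2_coalition_def)
  have c2: "total_2_coalition K3V K3E {1,2} {0}" using n0 n12 u' by (simp add: total_2_coalition_def)
  have po: "partition_on K3V {{0},{1,2}}"
    by (auto simp: partition_on_def K3V_def disjoint_def)
  show ?thesis unfolding total_2_coalition_partition_def
    using po c1 c2 by auto
qed

lemma K3_TC2: "int (TC2 K3V K3E) = TC2_bound K3V K3E"
proof -
  have bnd: "TC2_bound K3V K3E = 2" by (simp add: TC2_bound_def K3_min K3_max)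
  have le: "int (TC2 K3V K3E) \<le> 2" using TC2_le[OF K3_graph] K3_min bnd by simp
  define S where "S = {card \<Omega> | \<Omega>. total_2_coalition_partition K3V K3E \<Omega>}"
  have "2 \<in> S" unfolding S_def using K3_part by force
  moreover have "bdd_above S"
  proof -
    have "\<forall>n\<in>S. n \<le> 2"
    proof
      fix n assume "n \<in> S"
      then obtain Om where "n = card Om" "total_2_coalition_partition K3V K3E Om" by (auto simp: S_def)
      then show "n \<le> 2" using main_bound[OF K3_graph] K3_min bnd by fastforce
    qed
    then show ?thesis by (auto simp: bdd_above_def)
  qed
  ultimately have "2 \<le> Sup S" by (rule cSup_upper)
  then have "2 \<le> TC2 K3V K3E" by (simp add: TC2_def S_def)
  then show ?thesis using le bnd by simp
qed

theorem theorem3p5: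
  shows "(\<forall>(V :: 'a set) E. graph V E \<and> min_degree V E \<ge> 2 \<longrightarrow>
            int (TC2 V E) \<le> TC2_bound V E)
       \<and> (\<exists>(V :: nat set) E. graph V E \<and> min_degree V E \<ge> 2 \<and>
            int (TC2 V E) = TC2_bound V E)"
proof
  show "\<forall>(V :: 'a set) E. graph V E \<and> min_degree V E \<ge> 2 \<longrightarrow> int (TC2 V E) \<le> TC2_bound V E"
    using TC2_le by blast
  show "\<exists>(V :: nat set) E. graph V E \<and> min_degree V E \<ge> 2 \<and> int (TC2 V E) = TC2_bound V E"
    using K3_graph K3_min K3_TC2 by (intro exI[of _ K3V] exI[of _ K3E]) simp
qed

end
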